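(* Let $0<q<1$. Then \[ q^{2}(1+q)^{2}(1+q^{2})+q^{6}+(1+q^{2})\sum_{n=1}^{\infty}\frac{(1/2|q^{2})_{n}^{2}}{[n+1]_{q^{2}}!\,[n+2]_{q^{2}}!}\,q^{6n+6}=\frac{(1+q)^{6}(1+q^{2})^{2}}{\pi_{q}(1+q+q^{2})^{2}}\,q^{9/4}. \]
   Context: Let $0<q<1$ and write $q^{x}=e^{x\log q}$. $[z]_{q^2}=\frac{1-q^{2z}}{1-q^2}$; $[0]_{q^2}!=1$, $[n]_{q^2}!=\prod_{k=1}^n[k]_{q^2}$; $(1/2|q^2)_n=\prod_{k=0}^{n-1}[1/2+k]_{q^2}$. With $(z;q)_\infty=\prod_{k\ge0}(1-zq^k)$, $\pi_q=(1-q^2)q^{1/4}\frac{(q^2;q^2)_\infty^2}{(q;q^2)_\infty^2}$. *)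

theory Defs
  imports "HOL-Analysis.Analysis"
begin

definition qnum2 :: "real \<Rightarrow> real \<Rightarrow> real" where
  "qnum2 q z = (1 - q powr (2 * z)) / (1 - q\<^sup>2)"

definition qfact2 :: "real \<Rightarrow> nat \<Rightarrow> real" where
  "qfact2 q n = (\<Prod>k=1..n. qnum2 q (real k))"

definition qhalf_poch :: "real \<Rightarrow> nat \<Rightarrow> real" where
  "qhalf_poch q n = (\<Prod>k<n. qnum2 q (1/2 + real k))"

definition qpoch_inf :: "real \<Rightarrow> real \<Rightarrow> real" where
  "qpoch_inf z q = (\<Prod>k. (1 - z * q ^ k))"

definition pi_q :: "real \<Rightarrow> real" where
  "pi_q q = (1 - q\<^sup>2) * q powr (1/4) * (qpoch_inf (q\<^sup>2) (q\<^sup>2))\<^sup>2 / (qpoch_inf q (q\<^sup>2))\<^sup>2"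

end

theory Submission
  imports Defs
begin

definition Pq :: "real \<Rightarrow> real \<Rightarrow> nat \<Rightarrow> real" where
  "Pq x p n = (\<Prod>i<n. 1 - x * p ^ i)"

lemma Pq_0[simp]: "Pq x p 0 = 1" by (simp add: Pq_def)
lemma Pq_Suc: "Pq x p (Suc n) = Pq x p n * (1 - x * p ^ n)"
  by (simp add: Pq_def)

lemma Pq_split: "Pq x p (n + m) = Pq x p m * Pq (x * p ^ m) p n"
proof (induction n)
  case 0 then show ?case by simp
next
  case (Suc n)
  have "Pq x p (Suc n + m) = Pq x p (n + m) * (1 - x * p ^ (n + m))"
    by (simp add: Pq_Suc)
  also have "\<dots> = Pq x p m * Pq (x * p ^ m) p (Suc n)"
    using Suc by (simp add: Pq_Suc power_add mult_ac)
  finally show ?case .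
qed

lemma Pq_pos: assumes "0 \<le> x" "x < 1" "0 \<le> p" "p \<le> 1" shows "Pq x p n > 0"
  unfolding Pq_def
proof (rule prod_pos)
  fix i assume "i \<in> {..<n}"
  have "p ^ i \<le> 1" using assms by (simp add: power_le_one)
  then have "x * p ^ i \<le> x" using assms by (simp add: mult_left_le)
  then show "0 < 1 - x * p ^ i" using assms by simp
qed

lemma Pq_lim:
  assumes "0 \<le> x" "x < 1" "0 \<le> p" "p < 1"
  shows "(\<lambda>n. Pq x p n) \<longlonglongrightarrow> qpoch_inf x p" "qpoch_inf x p > 0"
proof -
  have s: "summable (\<lambda>i. norm ((1 - x * p ^ i) - 1))"
    using assms by (simp add: abs_mult summable_mult summable_geometric)
  have cp: "convergent_prod (\<lambda>i. 1 - x * p ^ i)"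
    by (rule abs_convergent_prod_imp_convergent_prod[OF summable_imp_abs_convergent_prod[OF s]])
  have "(\<lambda>n. \<Prod>i\<le>n. 1 - x * p ^ i) \<longlonglongrightarrow> qpoch_inf x p"
    unfolding qpoch_inf_def by (rule convergent_prod_LIMSEQ[OF cp])
  then have "(\<lambda>n. Pq x p (Suc n)) \<longlonglongrightarrow> qpoch_inf x p"
    by (simp add: Pq_def lessThan_Suc_atMost)
  then show L: "(\<lambda>n. Pq x p n) \<longlonglongrightarrow> qpoch_inf x p"
    by (rule LIMSEQ_imp_Suc)
  have nz: "qpoch_inf x p \<noteq> 0"
    unfolding qpoch_inf_def
  proof (rule prodinf_nonzero[OF cp])
    fix i
    have "p ^ i \<le> 1" using assms by (simp add: power_le_one)
    then have "x * p ^ i \<le> x" using assms by (simp add: mult_left_le)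
    then show "1 - x * p ^ i \<noteq> 0" using assms by simp
  qed
  have "qpoch_inf x p \<ge> 0"
    by (rule LIMSEQ_le_const[OF L]) (use Pq_pos[OF assms(1,2,3)] assms in \<open>auto intro: less_imp_le\<close>)
  with nz show "qpoch_inf x p > 0" by simp
qed


definition u :: "real \<Rightarrow> real \<Rightarrow> nat \<Rightarrow> real" where
  "u q c k = (Pq (1/q) (q^2) k)^2 / (Pq (q^2) (q^2) k * Pq c (q^2) k) * (c*q^2)^k"

lemma u_0[simp]: "u q c 0 = 1" by (simp add: u_def)

lemma qsq: fixes q :: real assumes "0 < q" "q < 1" shows "0 < q^2" "q^2 < 1"
proof -
  show "0 < q^2" using assms by simp
  have "q*q < 1*1" by (rule mult_strict_mono) (use assms in auto)
  then show "q^2 < 1" by (simp add: power2_eq_square)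
qed

lemma x_lt1: fixes q c :: real assumes "0 < q" "q < 1" "0 \<le> c" "c < 1" shows "c * (q^2)^k < 1"
proof -
  have "(q^2)^k \<le> 1" using qsq[OF assms(1,2)] power_le_one[of "q^2::real" k] by simp
  then have "c * (q^2)^k \<le> c" using assms by (simp add: mult_left_le)
  then show ?thesis using assms by simp
qed

lemma u_Suc:
  assumes "0 < q" "q < 1" "0 \<le> c" "c < 1"
  shows "u q c (Suc k) = u q c k * ((1 - (1/q) * (q^2)^k)^2 * (c*q^2)
            / ((1 - q^2 * (q^2)^k) * (1 - c * (q^2)^k)))"
proof -
  have a: "Pq (q^2) (q^2) k > 0" "Pq c (q^2) k > 0"
    using assms by (auto intro!: Pq_pos simp: power_le_one power_less_one_iff)
  have b: "1 - q^2 * (q^2)^k > 0" "1 - c * (q^2)^k > 0"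
    using x_lt1[OF assms(1,2) _ , of "q^2" k] x_lt1[OF assms] assms
    by (auto simp: power_less_one_iff)
  show ?thesis using a b unfolding u_def Pq_Suc
    by (simp add: field_simps power2_eq_square)
qed

lemma u_cp:
  assumes "0 < q" "q < 1" "0 \<le> c" "c < 1"
  shows "u q (c*q^2) k = u q c k * ((1-c) * (q^2)^k / (1 - c * (q^2)^k))"
proof -
  have s: "Pq c (q^2) (k + 1) = Pq c (q^2) 1 * Pq (c*(q^2)^1) (q^2) k" by (rule Pq_split)
  have s2: "Pq c (q^2) (Suc k) = Pq c (q^2) k * (1 - c * (q^2)^k)" by (rule Pq_Suc)
  have "Pq c (q^2) 1 = 1 - c" by (simp add: Pq_def)
  with s have "Pq c (q^2) (Suc k) = (1-c) * Pq (c*q^2) (q^2) k" by simp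
  with s2 have e: "Pq (c*q^2) (q^2) k = Pq c (q^2) k * (1 - c * (q^2)^k) / (1-c)"
    using assms by (simp add: field_simps)
  have a: "Pq (q^2) (q^2) k > 0" "Pq c (q^2) k > 0"
    using assms by (auto intro!: Pq_pos simp: power_le_one power_less_one_iff)
  have b: "1 - c * (q^2)^k > 0" using x_lt1[OF assms] by simp
  have q4: "(q^4)^k = (q^2)^k * (q^2)^k"
  proof -
    have "q^4 = q^2*q^2" by simp
    then show ?thesis by (simp only: power_mult_distrib)
  qed
  show ?thesis using a b assms unfolding u_def e
    by (simp add: field_simps power_mult_distrib q4)
qed

lemma key_alg:
  fixes q c x U :: real
  assumes "q \<noteq> 0" "1 - q^2*x \<noteq> 0" "1 - c*x \<noteq> 0"
  shows "(1-c)*(1-c*q^2)*U - (1-c*q)^2 * (U*((1-c)*x/(1-c*x)))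
       = -(1-c)*(1-q^2*x) * (U*((1-(1/q)*x)^2*(c*q^2)/((1-q^2*x)*(1-c*x)))) + (1-c)*(1-x)*U"
proof -
  let ?B = "1 - c*x"
  have h1: "(1-(1/q)*x)^2*(c*q^2) = c*(q-x)^2" using assms(1)
    by (simp add: field_simps power2_eq_square)
  have L: "(1-c)*(1-c*q^2)*U - (1-c*q)^2 * (U*((1-c)*x/?B))
      = (U*(1-c)/?B) * ((1-c*q^2)*?B - (1-c*q)^2*x)"
    using assms(3) by (simp add: field_simps)
  have R: "-(1-c)*(1-q^2*x) * (U*((1-(1/q)*x)^2*(c*q^2)/((1-q^2*x)*?B))) + (1-c)*(1-x)*U
      = (U*(1-c)/?B) * (-c*(q-x)^2 + (1-x)*?B)"
  proof -
    have e: "U*((1-(1/q)*x)^2*(c*q^2)/((1-q^2*x)*?B)) = U*(c*(q-x)^2/((1-q^2*x)*?B))"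
      by (simp only: h1)
    have f: "-(1-c)*(1-q^2*x) * (U*(c*(q-x)^2/((1-q^2*x)*?B))) + (1-c)*(1-x)*U
       = (U*(1-c)/?B) * (-c*(q-x)^2 + (1-x)*?B)"
    proof -
      have g: "(1-q^2*x) * (U*(c*(q-x)^2/((1-q^2*x)*?B))) = U*c*(q-x)^2/?B"
        using assms(2) by simp
      have "-(1-c)*(1-q^2*x) * (U*(c*(q-x)^2/((1-q^2*x)*?B))) = -(1-c)*(U*c*(q-x)^2/?B)"
        by (subst g[symmetric]) (simp only: mult.assoc)
      then show ?thesis using assms(3) by (simp add: field_simps)
    qed
    show ?thesis unfolding e f ..
  qed
  have P: "(1-c*q^2)*?B - (1-c*q)^2*x = -c*(q-x)^2 + (1-x)*?B"
    by (simp add: algebra_simps power2_eq_square)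
  show ?thesis unfolding L R P ..
qed


lemma fin_id:
  fixes q c :: real
  assumes "0 < q" "q < 1" "0 \<le> c" "c < 1"
  shows "(1-c)*(1-c*q^2)*(\<Sum>k<K. u q c k) - (1-c*q)^2*(\<Sum>k<K. u q (c*q^2) k)
         = -(1-c)*(1-(q^2)^K)*u q c K"
proof (induction K)
  case 0 then show ?case by simp
next
  case (Suc K)
  let ?x = "(q^2)^K"
  let ?U = "u q c K"
  have ne1: "1 - q^2 * ?x \<noteq> 0" using x_lt1[OF assms(1,2), of "q^2" K] qsq[OF assms(1,2)] by simp
  have ne2: "1 - c * ?x \<noteq> 0" using x_lt1[OF assms, of K] by linarith
  have k: "(1-c)*(1-c*q^2)*?U - (1-c*q)^2 * (?U*((1-c)*?x/(1-c*?x)))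
       = -(1-c)*(1-q^2*?x) * (?U*((1-(1/q)*?x)^2*(c*q^2)/((1-q^2*?x)*(1-c*?x)))) + (1-c)*(1-?x)*?U"
    by (rule key_alg) (use assms ne1 ne2 in auto)
  have "(1-c)*(1-c*q^2)*(\<Sum>k<Suc K. u q c k) - (1-c*q)^2*(\<Sum>k<Suc K. u q (c*q^2) k)
     = ((1-c)*(1-c*q^2)*(\<Sum>k<K. u q c k) - (1-c*q)^2*(\<Sum>k<K. u q (c*q^2) k))
       + ((1-c)*(1-c*q^2)*?U - (1-c*q)^2 * u q (c*q^2) K)"
    by (simp add: algebra_simps)
  also have "\<dots> = -(1-c)*(1-?x)*?U + (-(1-c)*(1-q^2*?x) * (?U*((1-(1/q)*?x)^2*(c*q^2)/((1-q^2*?x)*(1-c*?x)))) + (1-c)*(1-?x)*?U)"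
    unfolding Suc.IH by (simp only: u_cp[OF assms] k)
  also have "\<dots> = -(1-c)*(1-q^2*?x) * (?U*((1-(1/q)*?x)^2*(c*q^2)/((1-q^2*?x)*(1-c*?x))))"
    by linarith
  also have "\<dots> = -(1-c)*(1-(q^2)^Suc K)*u q c (Suc K)"
    by (simp only: u_Suc[OF assms] power_Suc)
  finally show ?case .
qed

lemma contig:
  fixes q c :: real
  assumes "0 < q" "q < 1" "0 \<le> c" "c < 1"
    and s1: "summable (u q c)" and s2: "summable (u q (c*q^2))"
  shows "(1-c)*(1-c*q^2)* suminf (u q c) = (1-c*q)^2 * suminf (u q (c*q^2))"
proof -
  have L1: "(\<lambda>K. (1-c)*(1-c*q^2)*(\<Sum>k<K. u q c k) - (1-c*q)^2*(\<Sum>k<K. u q (c*q^2) k))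
      \<longlonglongrightarrow> (1-c)*(1-c*q^2)* suminf (u q c) - (1-c*q)^2 * suminf (u q (c*q^2))"
    by (intro tendsto_intros summable_LIMSEQ s1 s2)
  have z: "(\<lambda>K. (q^2)^K) \<longlonglongrightarrow> 0" using qsq[OF assms(1,2)]
    by (intro LIMSEQ_power_zero) auto
  have L2: "(\<lambda>K. -(1-c)*(1-(q^2)^K)*u q c K) \<longlonglongrightarrow> -(1-c)*(1-0)*0"
    by (intro tendsto_intros z summable_LIMSEQ_zero s1)
  have "(1-c)*(1-c*q^2)* suminf (u q c) - (1-c*q)^2 * suminf (u q (c*q^2)) = -(1-c)*(1-0)*0"
    using LIMSEQ_unique[OF L1 L2[folded fin_id[OF assms(1-4)]]] .
  then show ?thesis by simp
qed

lemma Pq_nonneg_sq: "0 \<le> (Pq x p k)^2" by simp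

lemma u_nonneg:
  fixes q c :: real
  assumes "0 < q" "q < 1" "0 \<le> c" "c < 1"
  shows "0 \<le> u q c k"
proof -
  have a: "Pq (q^2) (q^2) k > 0" "Pq c (q^2) k > 0"
    using assms qsq[OF assms(1,2)] by (auto intro!: Pq_pos)
  show ?thesis unfolding u_def using a assms by (auto intro!: mult_nonneg_nonneg divide_nonneg_pos)
qed

lemma Pq_anti:
  assumes "0 \<le> c'" "c' \<le> c" "c < 1" "0 \<le> p" "p \<le> 1"
  shows "Pq c p k \<le> Pq c' p k"
  unfolding Pq_def
proof (rule prod_mono, safe)
  fix i
  have pi: "p ^ i \<le> 1" "0 \<le> p^i" using assms by (auto simp: power_le_one)
  then have "c * p ^ i \<le> c" using assms by (simp add: mult_left_le)
  then show "0 \<le> 1 - c * p ^ i" using assms by simp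
  show "1 - c * p ^ i \<le> 1 - c' * p ^ i" using pi assms by (simp add: mult_right_mono)
qed

lemma u_cmp:
  fixes q c c' :: real
  assumes "0 < q" "q < 1" "0 < c'" "c' \<le> c" "c < 1" "k \<ge> 1"
  shows "u q c' k \<le> (c'/c) * u q c k"
proof -
  let ?N = "(Pq (1/q) (q^2) k)^2 / Pq (q^2) (q^2) k"
  have a: "Pq (q^2) (q^2) k > 0" "Pq c (q^2) k > 0" "Pq c' (q^2) k > 0"
    using assms qsq[OF assms(1,2)] by (auto intro!: Pq_pos)
  have N: "0 \<le> ?N" using a by simp
  have m: "Pq c (q^2) k \<le> Pq c' (q^2) k" by (rule Pq_anti) (use assms qsq[OF assms(1,2)] in auto)
  have r: "0 \<le> c'/c" "c'/c \<le> 1" using assms by auto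
  have pw: "(c'/c)^k \<le> c'/c" using power_decreasing[OF assms(6) r] by simp
  have e: "(c'*q^2)^k = (c'/c)^k * (c*q^2)^k" using assms
  proof -
    have "(c'/c)*(c*q^2) = c'*q^2" using assms by simp
    then show ?thesis by (simp only: power_mult_distrib[symmetric])
  qed
  have cq: "0 \<le> (c*q^2)^k" using assms by simp
  have "u q c' k = ?N / Pq c' (q^2) k * (c'*q^2)^k" unfolding u_def by simp
  also have "\<dots> \<le> ?N / Pq c (q^2) k * (c'*q^2)^k"
    using a m N assms by (intro mult_right_mono divide_left_mono) auto
  also have "\<dots> = ?N / Pq c (q^2) k * ((c'/c)^k * (c*q^2)^k)" by (simp only: e)
  also have "\<dots> \<le> ?N / Pq c (q^2) k * ((c'/c) * (c*q^2)^k)"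
    using a N cq pw by (intro mult_left_mono mult_right_mono) auto
  also have "\<dots> = (c'/c) * u q c k" unfolding u_def using assms a by (simp add: field_simps)
  finally show ?thesis .
qed


lemma summ0:
  fixes q :: real
  assumes q: "0 < q" "q < 1"
  shows "summable (u q (q^4))"
proof -
  let ?c = "q^4::real"
  have q4: "?c < 1" using power_strict_decreasing[of 0 4 q] q by simp
  have q3: "q^3 < 1" using power_strict_decreasing[of 0 3 q] q by simp
  have q3p: "0 < q^3" using q by simp
  define d where "d = (1 - q^3)/2"
  have d0: "0 < d" using q3 by (simp add: d_def)
  obtain N where N: "(q^2)^N < d" using real_arch_pow_inv[OF d0 qsq(2)[OF q]] by blast
  define rho where "rho = q^6 / ((1-d)*(1-d))"
  have gt: "q^3 < 1 - d" using q3 by (simp add: d_def field_simps)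
  have d1': "0 < 1 - d" using gt q3p by linarith
  have "q^3 * q^3 < (1-d)*(1-d)" using gt q3p d1' by (intro mult_strict_mono) auto
  then have "q^6 < (1-d)*(1-d)" by (simp add: power_add[symmetric])
  moreover have "0 < (1-d)*(1-d)" using gt q3p by (intro mult_pos_pos) linarith+
  ultimately have rho1: "rho < 1" unfolding rho_def by (simp add: divide_less_eq)
  show ?thesis
  proof (rule summable_ratio_test[OF rho1, of "max N 1"])
    fix n assume n: "max N 1 \<le> n"
    let ?x = "(q^2)^n"
    have p: "0 < q^2" "q^2 < 1" using qsq[OF q] by auto
    have x0: "0 \<le> ?x" by simp
    have x1: "?x \<le> (q^2)^1" using n p by (intro power_decreasing) auto
    have x2: "?x \<le> (q^2)^N" using n p by (intro power_decreasing) auto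
    have xd: "?x < d" using x2 N by linarith
    have a1: "(1/q)*?x \<le> q" using x1 q by (simp add: field_simps power2_eq_square)
    have a0: "0 \<le> (1/q)*?x" using q by simp
    have qq: "q^2 \<le> q" using q by (simp add: power2_eq_square mult_left_le_one_le)
    have xq: "?x \<le> q" using x1 qq by simp
    have A: "(1 - (1/q)*?x)^2 \<le> 1" using a1 a0 q xq by (intro power_le_one) auto
    have A0: "0 \<le> (1 - (1/q)*?x)^2" by simp
    have b1: "q^2*?x \<le> ?x" using p x0 by (simp add: mult_left_le_one_le)
    have b2: "?c*?x \<le> ?x" using q4 x0 q by (simp add: mult_left_le_one_le)
    have B: "1 - d \<le> 1 - q^2*?x" using b1 xd by linarith
    have C: "1 - d \<le> 1 - ?c*?x" using b2 xd by linarith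
    have d1: "0 < 1 - d" using gt q3p by linarith
    have e6: "?c * q^2 = q^6" by (simp add: power_add[symmetric])
    have r: "(1 - (1/q)*?x)^2 * (?c*q^2) / ((1 - q^2*?x) * (1 - ?c*?x)) \<le> rho"
      unfolding rho_def e6
    proof (rule frac_le)
      show "0 \<le> q^6" by simp
      show "(1 - (1/q)*?x)^2 * q^6 \<le> q^6" using A by (simp add: mult_left_le_one_le)
      show "0 < (1-d)*(1-d)" using d1 by simp
      show "(1-d)*(1-d) \<le> (1 - q^2*?x) * (1 - ?c*?x)" using B C d1 by (intro mult_mono) auto
    qed
    have c0: "0 \<le> ?c" using q by simp
    have u0: "0 \<le> u q ?c n" by (rule u_nonneg) (use q q4 in auto)
    have u1: "0 \<le> u q ?c (Suc n)" by (rule u_nonneg) (use q q4 in auto)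
    have "u q ?c (Suc n) \<le> rho * u q ?c n"
      unfolding u_Suc[OF q _ q4, OF c0]
      using mult_left_mono[OF r u0] by (simp add: mult.commute)
    then show "norm (u q ?c (Suc n)) \<le> rho * norm (u q ?c n)" using u0 u1 by simp
  qed
qed


definition cJ :: "real \<Rightarrow> nat \<Rightarrow> real" where "cJ q J = q^4 * (q^2)^J"

lemma cJ_bounds:
  fixes q :: real assumes q: "0 < q" "q < 1"
  shows "0 < cJ q J" "cJ q J \<le> q^4" "cJ q J < 1" "cJ q J / q^4 = (q^2)^J"
proof -
  have p: "0 < q^2" "q^2 < 1" using qsq[OF q] by auto
  show "0 < cJ q J" using q by (simp add: cJ_def)
  have "(q^2)^J \<le> 1" using p power_le_one[of "q^2::real" J] by simp
  then show le: "cJ q J \<le> q^4" unfolding cJ_def using q by (simp add: mult_left_le)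
  have q4: "q^4 < 1" using power_strict_decreasing[of 0 4 q] q by simp
  show "cJ q J < 1" using le q4 by linarith
  show "cJ q J / q^4 = (q^2)^J" using q by (simp add: cJ_def)
qed

lemma q4_lt1: fixes q :: real assumes q: "0 < q" "q < 1" shows "q^4 < 1"
  using power_strict_decreasing[of 0 4 q] q by simp

lemma cJ_Suc: "cJ q (Suc J) = cJ q J * q^2" by (simp add: cJ_def mult_ac)

lemma summJ:
  fixes q :: real assumes q: "0 < q" "q < 1"
  shows "summable (u q (cJ q J))"
proof (rule summable_comparison_test'[OF summ0[OF q], of 1])
  fix n :: nat assume n: "1 \<le> n"
  note b = cJ_bounds[OF q, of J]
  have "u q (cJ q J) n \<le> (cJ q J / q^4) * u q (q^4) n"
    by (rule u_cmp) (use q b n q4_lt1[OF q] in auto)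
  also have "\<dots> \<le> 1 * u q (q^4) n"
    using b u_nonneg[OF q, of "q^4" n] qsq[OF q] q4_lt1[OF q]
    by (intro mult_right_mono) (auto simp: power_le_one)
  finally show "norm (u q (cJ q J) n) \<le> u q (q^4) n"
    using u_nonneg[OF q, of "cJ q J" n] b by simp
qed

lemma tailJ:
  fixes q :: real assumes q: "0 < q" "q < 1"
  shows "0 \<le> suminf (u q (cJ q J)) - 1"
    "suminf (u q (cJ q J)) - 1 \<le> (q^2)^J * (suminf (u q (q^4)) - 1)"
proof -
  note b = cJ_bounds[OF q, of J]
  have s0: "summable (u q (q^4))" by (rule summ0[OF q])
  have sJ: "summable (u q (cJ q J))" by (rule summJ[OF q])
  have s0': "summable (\<lambda>n. u q (q^4) (Suc n))" using s0 by (simp add: summable_Suc_iff)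
  have sJ': "summable (\<lambda>n. u q (cJ q J) (Suc n))" using sJ by (simp add: summable_Suc_iff)
  have eJ: "suminf (u q (cJ q J)) - 1 = (\<Sum>n. u q (cJ q J) (Suc n))"
    using suminf_split_head[OF sJ] by simp
  have e0: "suminf (u q (q^4)) - 1 = (\<Sum>n. u q (q^4) (Suc n))"
    using suminf_split_head[OF s0] by simp
  show "0 \<le> suminf (u q (cJ q J)) - 1"
    unfolding eJ by (rule suminf_nonneg[OF sJ']) (use u_nonneg[OF q] b in auto)
  have "(\<Sum>n. u q (cJ q J) (Suc n)) \<le> (\<Sum>n. (q^2)^J * u q (q^4) (Suc n))"
  proof (rule suminf_le)
    fix n
    have "u q (cJ q J) (Suc n) \<le> (cJ q J / q^4) * u q (q^4) (Suc n)"
      by (rule u_cmp) (use q b q4_lt1[OF q] in auto)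
    then show "u q (cJ q J) (Suc n) \<le> (q^2)^J * u q (q^4) (Suc n)" using b by simp
  qed (use sJ' s0' summable_mult in auto)
  also have "\<dots> = (q^2)^J * (\<Sum>n. u q (q^4) (Suc n))" by (rule suminf_mult[OF s0'])
  finally show "suminf (u q (cJ q J)) - 1 \<le> (q^2)^J * (suminf (u q (q^4)) - 1)"
    unfolding eJ e0 .
qed

lemma limJ:
  fixes q :: real assumes q: "0 < q" "q < 1"
  shows "(\<lambda>J. suminf (u q (cJ q J))) \<longlonglongrightarrow> 1"
proof -
  have z: "(\<lambda>J. (q^2)^J) \<longlonglongrightarrow> 0" using qsq[OF q] by (intro LIMSEQ_power_zero) auto
  have up: "(\<lambda>J. 1 + (q^2)^J * (suminf (u q (q^4)) - 1)) \<longlonglongrightarrow> 1 + 0 * (suminf (u q (q^4)) - 1)"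
    by (intro tendsto_intros z)
  show ?thesis
  proof (rule tendsto_sandwich[of "\<lambda>J. 1" _ _ "\<lambda>J. 1 + (q^2)^J * (suminf (u q (q^4)) - 1)"])
    show "\<forall>\<^sub>F n in sequentially. 1 \<le> suminf (u q (cJ q n))" using tailJ(1)[OF q] by simp
    show "\<forall>\<^sub>F n in sequentially. suminf (u q (cJ q n)) \<le> 1 + (q^2)^n * (suminf (u q (q^4)) - 1)"
      using tailJ(2)[OF q] by (simp add: algebra_simps)
  qed (use up in auto)
qed

definition PJ :: "real \<Rightarrow> nat \<Rightarrow> real" where
  "PJ q J = (Pq (q^5) (q^2) J)^2 / (Pq (q^4) (q^2) J * Pq (q^6) (q^2) J)"

lemma iterJ:
  fixes q :: real assumes q: "0 < q" "q < 1"
  shows "suminf (u q (q^4)) = PJ q J * suminf (u q (cJ q J))"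
proof (induction J)
  case 0 then show ?case by (simp add: PJ_def cJ_def)
next
  case (Suc J)
  note b = cJ_bounds[OF q, of J]
  let ?c = "cJ q J"
  have ct: "(1-?c)*(1-?c*q^2)* suminf (u q ?c) = (1-?c*q)^2 * suminf (u q (?c*q^2))"
    by (rule contig) (use q b summJ[OF q, of J] summJ[OF q, of "Suc J"] cJ_Suc in auto)
  have n1: "1 - ?c \<noteq> 0" using b by simp
  have n2: "1 - ?c*q^2 \<noteq> 0" using x_lt1[OF q _ b(3), of 1] b by simp
  have e5: "?c * q = q^5 * (q^2)^J" "?c = q^4 * (q^2)^J" "?c*q^2 = q^6 * (q^2)^J"
    unfolding cJ_def by algebra+
  have gen: "\<And>A B C a b c :: real. (A*a)^2/((B*b)*(C*c)) = A^2/(B*C) * (a^2/(b*c))"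
    by (simp add: power_mult_distrib mult_ac)
  have P: "PJ q (Suc J) = PJ q J * ((1-?c*q)^2 / ((1-?c)*(1-?c*q^2)))"
    unfolding PJ_def Pq_Suc e5(1) e5(3) unfolding e5(2) by (rule gen)
  have "suminf (u q (q^4)) = PJ q J * suminf (u q ?c)" by (rule Suc.IH)
  also have "\<dots> = PJ q J * ((1-?c*q)^2 / ((1-?c)*(1-?c*q^2)) * suminf (u q (?c*q^2)))"
  proof -
    have D: "(1-?c)*(1-?c*q^2) \<noteq> 0" using n1 n2 by simp
    have "suminf (u q ?c) = ((1-?c)*(1-?c*q^2)* suminf (u q ?c)) / ((1-?c)*(1-?c*q^2))"
      using D by simp
    also have "\<dots> = (1-?c*q)^2 * suminf (u q (?c*q^2)) / ((1-?c)*(1-?c*q^2))" unfolding ct ..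
    finally show ?thesis by simp
  qed
  also have "\<dots> = PJ q (Suc J) * suminf (u q (cJ q (Suc J)))"
    unfolding P cJ_Suc by simp
  finally show ?case .
qed

lemma PJ_lim:
  fixes q :: real assumes q: "0 < q" "q < 1"
  shows "(\<lambda>J. PJ q J) \<longlonglongrightarrow> suminf (u q (q^4))"
proof -
  have pos: "suminf (u q (cJ q J)) \<ge> 1" for J using tailJ(1)[OF q, of J] by simp
  have e: "PJ q J = suminf (u q (q^4)) / suminf (u q (cJ q J))" for J
    using iterJ[OF q, of J] pos[of J] by (simp add: field_simps)
  have "(\<lambda>J. suminf (u q (q^4)) / suminf (u q (cJ q J))) \<longlonglongrightarrow> suminf (u q (q^4)) / 1"
    by (intro tendsto_intros limJ[OF q]) simp
  then show ?thesis unfolding e by simp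
qed


lemma abs1:
  fixes a b d q :: real
  assumes "a \<noteq> 0" "b \<noteq> 0" "d \<noteq> 0"
  shows "d*(q^2*b^2*(a^2*q^4/((a*b)*(a*b*d)))) = q^6"
  using assms by (simp add: field_simps) algebra

lemma abs2:
  fixes a b c d q Qq Qp r :: real
  assumes "a \<noteq> 0" "b \<noteq> 0" "c \<noteq> 0" "d \<noteq> 0" "Qq \<noteq> 0" "Qp \<noteq> 0" "r \<noteq> 0"
  shows "d*(q^2*b^2*((Qq/(a*(a*c)))^2 / ((Qp/(a*b))*(Qp/((a*b)*(a*b*d))))))
     = b^6*d^2/(((a*b)*r*Qp^2/Qq^2)*c^2)*(r*q^2)"
  using assms by (simp add: field_simps) algebra

lemma final_alg:
  fixes q Qq Qp r :: real
  assumes "0 < q" "q < 1" "Qq > 0" "Qp > 0" "r > 0"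
  shows "q^2 * (1 + q)^2 * (1 + q^2) + q^6
     + (1 + q^2) * (q^2*(1+q)^2 * ((Qq/((1-q)*(1-q*q^2)))^2 / ((Qp/(1-q^2)) * (Qp/((1-q^2)*(1-q^2*q^2))))
          - 1 - (1-1/q)^2 * (q^4*q^2) / ((1-q^2)*(1-q^4))))
   = (1 + q) ^ 6 * (1 + q^2)^2 / (((1 - q^2) * r * Qp^2 / Qq^2) * (1 + q + q^2)^2) * (r * q^2)"
proof -
  have pos: "0 < 1 + q + q^2" using assms by (smt (verit) zero_le_power2)
  have pos2: "0 < 1 + q^2" using assms by (smt (verit) zero_le_power2)
  have na: "1 - q \<noteq> 0" "1 + q \<noteq> 0" "1 + q^2 \<noteq> 0" "1 + q + q^2 \<noteq> 0" "q \<noteq> 0"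
    using assms pos pos2 by linarith+
  have s1: "1 - q*q^2 = (1-q)*(1+q+q^2)" by algebra
  have s2: "1 - q^2 = (1-q)*(1+q)" by algebra
  have s3: "1 - q^2*q^2 = (1-q)*(1+q)*(1+q^2)" by algebra
  have s4: "1 - q^4 = (1-q)*(1+q)*(1+q^2)" by algebra
  have h: "(1-1/q)^2*(q^4*q^2) = (1-q)^2*q^4" using na by (simp add: field_simps) algebra
  have u1: "(1 + q^2) * (q^2*(1+q)^2 * ((1-1/q)^2 * (q^4*q^2) / ((1-q^2)*(1-q^4)))) = q^6"
    unfolding s2 s4 h by (rule abs1) (use na in auto)
  have m: "(1 + q^2) * (q^2*(1+q)^2 * ((Qq/((1-q)*(1-q*q^2)))^2 / ((Qp/(1-q^2)) * (Qp/((1-q^2)*(1-q^2*q^2))))))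
     = (1 + q) ^ 6 * (1 + q^2)^2 / (((1 - q^2) * r * Qp^2 / Qq^2) * (1 + q + q^2)^2) * (r * q^2)"
    unfolding s1 s2 s3 by (rule abs2) (use na assms in auto)
  show ?thesis using u1 m by (simp add: algebra_simps)
qed


lemma qnum2_nat:
  fixes q :: real assumes "0 < q"
  shows "qnum2 q (real (Suc n)) = (1 - q^2 * (q^2)^n) / (1 - q^2)"
proof -
  have e: "2 * real (Suc n) = real (2 * Suc n)" by simp
  have "q powr (2 * real (Suc n)) = q ^ (2 * Suc n)" unfolding e by (rule powr_realpow[OF assms])
  also have "\<dots> = q^2 * (q^2)^n" by (simp add: power_mult power2_eq_square)
  finally show ?thesis by (simp add: qnum2_def)
qed

lemma qnum2_half:
  fixes q :: real assumes "0 < q"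
  shows "qnum2 q (1/2 + real k) = (1 - q * (q^2)^k) / (1 - q^2)"
proof -
  have e: "2 * (1/2 + real k) = real (Suc (2 * k))" by simp
  have "q powr (2 * (1/2 + real k)) = q ^ (Suc (2 * k))" unfolding e by (rule powr_realpow[OF assms])
  also have "\<dots> = q * (q^2)^k" by (simp add: power_mult)
  finally show ?thesis by (simp add: qnum2_def)
qed

lemma qfact2_eq:
  fixes q :: real assumes "0 < q" "q < 1"
  shows "qfact2 q n = Pq (q^2) (q^2) n / (1 - q^2)^n"
proof (induction n)
  case 0 then show ?case by (simp add: qfact2_def)
next
  case (Suc n)
  have "qfact2 q (Suc n) = qfact2 q n * qnum2 q (real (Suc n))"
    by (simp add: qfact2_def atLeastAtMostSuc_conv mult.commute)
  also have "\<dots> = Pq (q^2) (q^2) (Suc n) / (1 - q^2)^(Suc n)"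
    unfolding Suc.IH qnum2_nat[OF assms(1)] Pq_Suc by simp
  finally show ?case .
qed

lemma qhalf_eq:
  fixes q :: real assumes "0 < q" "q < 1"
  shows "qhalf_poch q n = Pq q (q^2) n / (1 - q^2)^n"
proof (induction n)
  case 0 then show ?case by (simp add: qhalf_poch_def)
next
  case (Suc n)
  have "qhalf_poch q (Suc n) = qhalf_poch q n * qnum2 q (1/2 + real n)"
    by (simp add: qhalf_poch_def)
  also have "\<dots> = Pq q (q^2) (Suc n) / (1 - q^2)^(Suc n)"
    unfolding Suc.IH qnum2_half[OF assms(1)] Pq_Suc by simp
  finally show ?case .
qed


lemma abs3:
  fixes q A B C E Z :: real
  assumes "q \<noteq> 0" "1 - q^2 \<noteq> 0" "B \<noteq> 0" "C \<noteq> 0" "E \<noteq> 0"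
  shows "(A/E)^2/((B/(E*(1-q^2)))*(C/(E*(1-q^2)^2)))*Z
       = q^2*(1+q)^2 * (((1-1/q)*A)^2/(B*(C/(1-q^2)))*Z)"
proof -
  have h: "q^2*(1+q)^2*(1-1/q)^2 = (1-q^2)^2" using assms(1) by (simp add: field_simps) algebra
  have "q^2*(1+q)^2 * (((1-1/q)*A)^2/(B*(C/(1-q^2)))*Z) = (q^2*(1+q)^2*(1-1/q)^2) * (A^2/(B*(C/(1-q^2)))*Z)"
    by (simp add: power_mult_distrib)
  also have "\<dots> = (1-q^2)^2 * (A^2/(B*(C/(1-q^2)))*Z)" by (simp only: h)
  also have "\<dots> = (A/E)^2/((B/(E*(1-q^2)))*(C/(E*(1-q^2)^2)))*Z"
    using assms by (simp add: field_simps power2_eq_square)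
  finally show ?thesis by (rule sym)
qed

lemma term_eq:
  fixes q :: real assumes q: "0 < q" "q < 1"
  shows "(qhalf_poch q m)^2 / (qfact2 q (m + 1) * qfact2 q (m + 2)) * q^(6*m + 6)
       = q^2*(1+q)^2 * u q (q^4) (m+1)"
proof -
  let ?p = "q^2"
  have p: "0 < ?p" "?p < 1" using qsq[OF q] by auto
  have B: "Pq ?p ?p (m+1) > 0" "Pq ?p ?p (m+2) > 0" using p by (auto intro!: Pq_pos)
  have E: "(1 - ?p)^m > 0" using p by simp
  have n1: "Pq (1/q) ?p (m+1) = (1 - 1/q) * Pq q ?p m"
    using Pq_split[of "1/q" ?p m 1] q by (simp add: Pq_def power2_eq_square)
  have n2: "Pq ?p ?p (m+2) = (1 - ?p) * Pq (q^4) ?p (m+1)"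
  proof -
    have "Pq ?p ?p ((m+1)+1) = Pq ?p ?p 1 * Pq (?p*?p^1) ?p (m+1)" by (rule Pq_split)
    moreover have "?p*?p^1 = q^4" by algebra
    moreover have "Pq ?p ?p 1 = 1 - ?p" by (simp add: Pq_def)
    ultimately show ?thesis by (simp add: add.assoc)
  qed
  have n3: "Pq (q^4) ?p (m+1) = Pq ?p ?p (m+2) / (1 - ?p)" using n2 p by simp
  have z: "(q^4*q^2)^(m+1) = q^(6*m+6)"
  proof -
    have "q^4*q^2 = q^6" by algebra
    then show ?thesis by (simp add: power_mult[symmetric] power_add algebra_simps)
  qed
  have pw1: "(1-?p)^(m+1) = (1-?p)^m*(1-?p)" "(1-?p)^(m+2) = (1-?p)^m*(1-?p)^2"
    by (simp_all add: power_add power2_eq_square)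
  show ?thesis
    unfolding qhalf_eq[OF q] qfact2_eq[OF q] u_def n1 n3 z pw1
    by (rule abs3) (use q p B E in auto)
qed


lemma S_value:
  fixes q :: real assumes q: "0 < q" "q < 1"
  shows "suminf (u q (q^4)) = (qpoch_inf q (q^2)/((1-q)*(1-q*q^2)))^2
      / ((qpoch_inf (q^2) (q^2)/(1-q^2)) * (qpoch_inf (q^2) (q^2)/((1-q^2)*(1-q^2*q^2))))"
proof -
  let ?p = "q^2"
  have p: "0 < ?p" "?p < 1" using qsq[OF q] by auto
  have e33: "q*q^2 = q^3" "q^2*q^2 = q^4" by algebra+
  have q3: "q*q^2 < 1" unfolding e33 using power_strict_decreasing[of 0 3 q] q by simp
  have q4: "q^2*q^2 < 1" unfolding e33 using q4_lt1[OF q] by simp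
  let ?K1 = "(1-q)*(1-q*q^2)" and ?K2 = "1-q^2" and ?K3 = "(1-q^2)*(1-q^2*q^2)"
  have K: "?K1 \<noteq> 0" "?K2 \<noteq> 0" "?K3 \<noteq> 0" using q p q3 q4 by auto
  have e1: "Pq q ?p (J+2) = ?K1 * Pq (q^5) ?p J" for J
  proof -
    have "Pq q ?p (J+2) = Pq q ?p 2 * Pq (q*?p^2) ?p J" by (rule Pq_split)
    moreover have "q*?p^2 = q^5" by algebra
    moreover have "Pq q ?p 2 = ?K1" by (simp add: Pq_def numeral_2_eq_2)
    ultimately show ?thesis by simp
  qed
  have e2: "Pq ?p ?p (J+1) = ?K2 * Pq (q^4) ?p J" for J
  proof -
    have "Pq ?p ?p (J+1) = Pq ?p ?p 1 * Pq (?p*?p^1) ?p J" by (rule Pq_split)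
    moreover have "?p*?p^1 = q^4" by algebra
    moreover have "Pq ?p ?p 1 = ?K2" by (simp add: Pq_def)
    ultimately show ?thesis by simp
  qed
  have e3: "Pq ?p ?p (J+2) = ?K3 * Pq (q^6) ?p J" for J
  proof -
    have "Pq ?p ?p (J+2) = Pq ?p ?p 2 * Pq (?p*?p^2) ?p J" by (rule Pq_split)
    moreover have "?p*?p^2 = q^6" by algebra
    moreover have "Pq ?p ?p 2 = ?K3" by (simp add: Pq_def numeral_2_eq_2)
    ultimately show ?thesis by simp
  qed
  have PJe: "PJ q J = (Pq q ?p (J+2)/?K1)^2 / ((Pq ?p ?p (J+1)/?K2) * (Pq ?p ?p (J+2)/?K3))" for J
    unfolding PJ_def e1 e2 e3 using K by simp
  have Lq: "(\<lambda>J. Pq q ?p (J+2)) \<longlonglongrightarrow> qpoch_inf q ?p"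
    by (rule LIMSEQ_ignore_initial_segment[OF Pq_lim(1)]) (use q p in auto)
  have Lp1: "(\<lambda>J. Pq ?p ?p (J+1)) \<longlonglongrightarrow> qpoch_inf ?p ?p"
    by (rule LIMSEQ_ignore_initial_segment[OF Pq_lim(1)]) (use p in auto)
  have Lp2: "(\<lambda>J. Pq ?p ?p (J+2)) \<longlonglongrightarrow> qpoch_inf ?p ?p"
    by (rule LIMSEQ_ignore_initial_segment[OF Pq_lim(1)]) (use p in auto)
  have Qp: "qpoch_inf ?p ?p > 0" by (rule Pq_lim(2)) (use p in auto)
  have L: "(\<lambda>J. PJ q J) \<longlonglongrightarrow> (qpoch_inf q ?p/?K1)^2 / ((qpoch_inf ?p ?p/?K2) * (qpoch_inf ?p ?p/?K3))"
    unfolding PJe by (intro tendsto_intros Lq Lp1 Lp2) (use K Qp in auto)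
  show ?thesis using LIMSEQ_unique[OF PJ_lim[OF q] L] .
qed

theorem mainTheorem9:
  fixes q :: real
  assumes "0 < q" and "q < 1"
  shows "q\<^sup>2 * (1 + q)\<^sup>2 * (1 + q\<^sup>2) + q ^ 6
      + (1 + q\<^sup>2) * (\<Sum>n. (qhalf_poch q (Suc n))\<^sup>2
            / (qfact2 q (Suc n + 1) * qfact2 q (Suc n + 2)) * q ^ (6 * Suc n + 6))
    = (1 + q) ^ 6 * (1 + q\<^sup>2)\<^sup>2 / (pi_q q * (1 + q + q\<^sup>2)\<^sup>2) * q powr (9/4)"
proof -
  note q = assms
  let ?S = "suminf (u q (q^4))"
  have s0: "summable (u q (q^4))" by (rule summ0[OF q])
  have s2: "summable (\<lambda>n. u q (q^4) (n+2))" using s0 by (rule summable_ignore_initial_segment)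
  have te: "(qhalf_poch q (Suc n))\<^sup>2 / (qfact2 q (Suc n + 1) * qfact2 q (Suc n + 2)) * q ^ (6 * Suc n + 6)
      = q^2*(1+q)^2 * u q (q^4) (n+2)" for n
    using term_eq[OF q, of "Suc n"] by simp
  have u1: "u q (q^4) 1 = (1-1/q)^2 * (q^4*q^2) / ((1-q^2)*(1-q^4))"
    by (simp add: u_def Pq_def)
  have sp: "?S = (\<Sum>n. u q (q^4) (n+2)) + (1 + u q (q^4) 1)"
    using suminf_split_initial_segment[OF s0, of 2] by (simp add: numeral_2_eq_2)
  have sum: "(\<Sum>n. (qhalf_poch q (Suc n))\<^sup>2 / (qfact2 q (Suc n + 1) * qfact2 q (Suc n + 2)) * q ^ (6 * Suc n + 6))
     = q^2*(1+q)^2 * (?S - 1 - (1-1/q)^2 * (q^4*q^2) / ((1-q^2)*(1-q^4)))"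
    unfolding te suminf_mult[OF s2] using sp u1 by simp
  have Qq: "qpoch_inf q (q^2) > 0" by (rule Pq_lim(2)) (use q qsq[OF q] in auto)
  have Qp: "qpoch_inf (q^2) (q^2) > 0" by (rule Pq_lim(2)) (use qsq[OF q] in auto)
  have r: "q powr (1/4) > 0" using q by simp
  have pw: "q powr (9/4) = q powr (1/4) * q^2"
  proof -
    have "q powr (9/4) = q powr (1/4 + 2)" by simp
    also have "\<dots> = q powr (1/4) * q powr 2" by (rule powr_add)
    also have "q powr 2 = q^2" using q by (simp add: powr_numeral)
    finally show ?thesis .
  qed
  show ?thesis
    unfolding sum S_value[OF q] pi_q_def pw
    using final_alg[OF q Qq Qp r] by simp
qed

end
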